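(* Let $N=2^n$ and $0\le i<j<N$. Suppose there exists a finite sequence of integers $a_0,a_1,\ldots,a_\ell\in[0,N)$, $\ell\ge0$, with $a_0=i$, $a_\ell=j$, such that for every $m\in[0,\ell)$ one of the following holds: (1) there exist $0\le u<w<n$ with $b_k(a_m)=b_k(a_{m+1})$ for all $k\in[0,n)\setminus\{u,w\}$, $b_u(a_m)=b_w(a_{m+1})=1$ and $b_w(a_m)=b_u(a_{m+1})=0$; or (2) $b_k(a_m)\le b_k(a_{m+1})$ for all $k\in[0,n)$. Then exactly one of the following holds: (a) $\mathrm{w}(\mathbf{g}_j)>\mathrm{w}(\mathbf{g}_i)$, i.e. the first nonzero component of $(S^{(n)}_{j,w})_w$ is at a larger weight than that of $(S^{(n)}_{i,w})_w$; or (b) $\mathrm{w}(\mathbf{g}_j)=\mathrm{w}(\mathbf{g}_i)$ and $s^{(n)}_i>s^{(n)}_j$.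
   Context: All vectors are binary (over $GF(2)$), indices are zero-based. Let $G_N=\begin{pmatrix}1&0\\1&1\end{pmatrix}^{\otimes n}$ for $N=2^n$, with rows $\mathbf{g}_0,\ldots,\mathbf{g}_{N-1}$; $\mathrm{w}(\cdot)$ is Hamming weight. $S^{(n)}_{i,w}$ is the number of words of weight $w$ in $\mathbf{g}_i+\langle\mathbf{g}_{i+1},\ldots,\mathbf{g}_{N-1}\rangle$, and $s^{(n)}_i:=S^{(n)}_{i,\mathrm{w}(\mathbf{g}_i)}$ (the first nonzero entry of $(S^{(n)}_{i,w})_w$). For $i\in[0,N)$, $b_j(i)$ denotes the $j$-th bit of $i$, i.e. $i=\sum_{j=0}^{n-1}b_j(i)2^j$. (The existence of such a sequence is the sufficient condition from the literature for the synthetic channel $W_N^{(i)}$ to be stochastically degraded with respect to $W_N^{(j)}$.) *)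

theory Defs
  imports Main
begin

definition bitn :: "nat \<Rightarrow> nat \<Rightarrow> nat" where
  "bitn j i = (i div 2 ^ j) mod 2"

(* kernel F = [[1,0],[1,1]], entries indexed by (row, column) in {0,1} *)
definition kerF :: "nat \<Rightarrow> nat \<Rightarrow> nat" where
  "kerF a b = (if a = 0 \<and> b = 1 then 0 else 1)"

(* G_N = F^{\<otimes> n}, N = 2^n: entry (i,k) is the product of kernel entries over the bits *)
definition Gmat :: "nat \<Rightarrow> nat \<Rightarrow> nat \<Rightarrow> nat" where
  "Gmat n i k = (\<Prod>j<n. kerF (bitn j i) (bitn j k))"

(* binary vectors of length N = 2^n are functions nat => nat with values in {0,1},
   zero outside [0,N).  Sum over GF(2) of the rows g_t, t in T *)
definition rowsum :: "nat \<Rightarrow> nat set \<Rightarrow> nat \<Rightarrow> nat" where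
  "rowsum n T = (\<lambda>k. if k < 2 ^ n then (\<Sum>t\<in>T. Gmat n t k) mod 2 else 0)"

definition grow :: "nat \<Rightarrow> nat \<Rightarrow> nat \<Rightarrow> nat" where
  "grow n i = rowsum n {i}"

definition hw :: "nat \<Rightarrow> (nat \<Rightarrow> nat) \<Rightarrow> nat" where
  "hw n v = card {k. k < 2 ^ n \<and> v k \<noteq> 0}"

(* the coset g_i + <g_{i+1},...,g_{N-1}> *)
definition coset :: "nat \<Rightarrow> nat \<Rightarrow> (nat \<Rightarrow> nat) set" where
  "coset n i = {rowsum n (insert i T) | T. T \<subseteq> {i<..<2 ^ n}}"

definition S :: "nat \<Rightarrow> nat \<Rightarrow> nat \<Rightarrow> nat" where
  "S n i w = card {v \<in> coset n i. hw n v = w}"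

definition s :: "nat \<Rightarrow> nat \<Rightarrow> nat" where
  "s n i = S n i (hw n (grow n i))"

end

theory Submission imports Defs begin


definition sub :: "nat \<Rightarrow> nat \<Rightarrow> nat \<Rightarrow> bool" where
  "sub n k t = (\<forall>b<n. bit k b \<longrightarrow> bit t b)"

lemma bitn_bit: "bitn j i = (if bit i j then 1 else 0)"
  by (simp add: bitn_def bit_iff_odd odd_iff_mod_2_eq_one even_iff_mod_2_eq_zero)

lemma prod01: "(\<Prod>b<(n::nat). if P b then 1 else 0::nat) = (if \<forall>b<n. P b then 1 else 0)"
  by (induction n) (auto simp: less_Suc_eq)

lemma Gmat_sub: "Gmat n t k = (if sub n k t then 1 else 0)"
proof -
  have "\<And>b. kerF (bitn b t) (bitn b k) = (if bit k b \<longrightarrow> bit t b then 1 else 0)"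
    by (simp add: kerF_def bitn_bit)
  then show ?thesis by (simp add: Gmat_def sub_def prod01)
qed

lemma lt_bits: "(x::nat) < 2 ^ n \<Longrightarrow> bit x b \<Longrightarrow> b < n"
proof -
  assume "x < 2 ^ n" "bit x b"
  then have "bit (take_bit n x) b" by (simp add: take_bit_nat_eq_self)
  then show "b < n" by (simp add: bit_take_bit_iff)
qed

lemma lt_of_bits: "(\<And>b. bit (z::nat) b \<Longrightarrow> b < n) \<Longrightarrow> z < 2 ^ n"
proof -
  assume h: "\<And>b. bit (z::nat) b \<Longrightarrow> b < n"
  have "take_bit n z = z" by (rule bit_eqI) (auto simp: bit_take_bit_iff h)
  then show ?thesis by (metis take_bit_nat_eq_self_iff)
qed

lemma eq_bits: "x < 2 ^ n \<Longrightarrow> y < 2 ^ n \<Longrightarrow> (\<forall>b<n. bit x b = bit y b) \<Longrightarrow> (x::nat) = y"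
  by (rule bit_eqI) (meson lt_bits)

lemma sub_le: assumes "sub n m t" "m < 2 ^ n" shows "m \<le> t"
proof -
  have "m = and m t"
    by (rule bit_eqI) (use assms in \<open>auto simp: bit_and_iff sub_def dest: lt_bits\<close>)
  then have "int m = and (int m) (int t)" by (metis of_nat_and_eq)
  also have "\<dots> \<le> int t" by simp
  finally show ?thesis by simp
qed

definition tau :: "nat \<Rightarrow> nat \<Rightarrow> nat \<Rightarrow> nat" where
  "tau u w b = (if b = u then w else if b = w then u else b)"

definition sw :: "nat \<Rightarrow> nat \<Rightarrow> nat \<Rightarrow> nat" where
  "sw u w t = (if bit t u = bit t w then t else flip_bit u (flip_bit w t))"

lemma bit_sw: "bit (sw u w t) b = bit t (tau u w b)"
  by (auto simp: sw_def tau_def bit_flip_bit_iff)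

lemma sw_sw: "sw u w (sw u w t) = t"
  by (rule bit_eqI) (auto simp: bit_sw tau_def)

lemma sw_sym: "sw u w t = sw w u t"
  by (rule bit_eqI) (auto simp: bit_sw tau_def)

lemma inj_sw: "inj (sw u w)"
  by (metis injI sw_sw)

lemma sw_lt: "u < n \<Longrightarrow> w < n \<Longrightarrow> t < 2 ^ n \<Longrightarrow> sw u w t < 2 ^ n"
  by (rule lt_of_bits) (auto simp: bit_sw tau_def split: if_splits dest: lt_bits)

lemma sub_sw: assumes "u < n" "w < n" shows "sub n (sw u w k) (sw u w t) = sub n k t"
proof -
  have tn: "\<And>b. b < n \<Longrightarrow> tau u w b < n" "\<And>b. tau u w (tau u w b) = b"
    using assms by (auto simp: tau_def)
  show ?thesis unfolding sub_def bit_sw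
    by (metis tn)
qed

lemma sw_arith: assumes "bit t u" "\<not> bit t w" "u \<noteq> w" shows "sw u w t + 2 ^ u = t + 2 ^ w"
proof -
  have "set_bit u (sw u w t) = set_bit w t"
    by (rule bit_eqI) (use assms in \<open>auto simp: bit_sw tau_def bit_set_bit_iff\<close>)
  moreover have "\<not> bit (sw u w t) u" using assms by (simp add: bit_sw tau_def)
  ultimately show ?thesis using assms by (simp add: set_bit_eq)
qed



definition pi :: "nat \<Rightarrow> nat \<Rightarrow> nat \<Rightarrow> (nat \<Rightarrow> nat) \<Rightarrow> nat \<Rightarrow> nat" where
  "pi n u w v = (\<lambda>k. if k < 2 ^ n then v (sw u w k) else 0)"

lemma Gmat_sw: "u < n \<Longrightarrow> w < n \<Longrightarrow> Gmat n t (sw u w k) = Gmat n (sw u w t) k"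
  by (metis Gmat_sub sub_sw sw_sw)

lemma pi_rowsum: assumes "u < n" "w < n" shows "pi n u w (rowsum n T) = rowsum n (sw u w ` T)"
proof (rule ext)
  fix k
  show "pi n u w (rowsum n T) k = rowsum n (sw u w ` T) k"
  proof (cases "k < 2 ^ n")
    case True
    then have "sw u w k < 2 ^ n" using assms sw_lt by blast
    moreover have "(\<Sum>t\<in>sw u w ` T. Gmat n t k) = (\<Sum>t\<in>T. Gmat n (sw u w t) k)"
      by (simp add: sum.reindex inj_on_subset[OF inj_sw])
    ultimately show ?thesis using True assms by (simp add: pi_def rowsum_def Gmat_sw)
  qed (simp add: pi_def rowsum_def)
qed

lemma hw_pi: assumes "u < n" "w < n" shows "hw n (pi n u w v) = hw n v"
proof -
  have "{k. k < 2 ^ n \<and> pi n u w v k \<noteq> 0} = sw u w ` {k. k < 2 ^ n \<and> v k \<noteq> 0}"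
  proof (rule set_eqI, rule iffI)
    fix k assume "k \<in> {k. k < 2 ^ n \<and> pi n u w v k \<noteq> 0}"
    then have "sw u w k \<in> {k. k < 2 ^ n \<and> v k \<noteq> 0}" using assms sw_lt by (auto simp: pi_def)
    then show "k \<in> sw u w ` {k. k < 2 ^ n \<and> v k \<noteq> 0}" by (metis image_eqI sw_sw)
  next
    fix k assume "k \<in> sw u w ` {k. k < 2 ^ n \<and> v k \<noteq> 0}"
    then show "k \<in> {k. k < 2 ^ n \<and> pi n u w v k \<noteq> 0}" using assms sw_lt by (auto simp: pi_def sw_sw)
  qed
  then show ?thesis unfolding hw_def by (simp add: card_image inj_on_subset[OF inj_sw])
qed

lemma pi_pi: assumes "u < n" "w < n" "\<forall>k. \<not> k < 2 ^ n \<longrightarrow> v k = 0" shows "pi n u w (pi n u w v) = v"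
  using assms sw_lt by (auto simp: pi_def sw_sw fun_eq_iff)

lemma sum_ind: "finite A \<Longrightarrow> (\<Sum>t\<in>A. if P t then 1 else 0::nat) = card {t\<in>A. P t}"
  by (simp add: sum.inter_filter[symmetric])

lemma indep: assumes "A \<subseteq> {..<2 ^ n}" "B \<subseteq> {..<2 ^ n}" "rowsum n A = rowsum n B" shows "A = B"
proof (rule ccontr)
  assume ne: "A \<noteq> B"
  define D where "D = (A - B) \<union> (B - A)"
  have "D \<subseteq> {..<2 ^ n}" using assms unfolding D_def by blast
  then have fD: "finite D" using finite_subset by blast
  have "D \<noteq> {}" using ne unfolding D_def by blast
  define m where "m = Max D"
  have mD: "m \<in> D" using fD \<open>D \<noteq> {}\<close> m_def by simp
  have mx: "\<And>t. t \<in> D \<Longrightarrow> t \<le> m" using fD m_def by simp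
  have m2: "m < 2 ^ n" using mD assms unfolding D_def by auto
  have eq: "(\<Sum>t\<in>A. Gmat n t m) mod 2 = (\<Sum>t\<in>B. Gmat n t m) mod 2"
    using assms(3) m2 by (metis rowsum_def)
  define A' where "A' = {t\<in>A. sub n m t}"
  define B' where "B' = {t\<in>B. sub n m t}"
  have fAB: "finite A" "finite B" using assms finite_subset by blast+
  have sA: "(\<Sum>t\<in>A. Gmat n t m) = card A'" unfolding A'_def Gmat_sub by (rule sum_ind[OF fAB(1)])
  have sB: "(\<Sum>t\<in>B. Gmat n t m) = card B'" unfolding B'_def Gmat_sub by (rule sum_ind[OF fAB(2)])
  have "A' \<subseteq> {..<2 ^ n}" "B' \<subseteq> {..<2 ^ n}" unfolding A'_def B'_def using assms by blast+
  then have fA: "finite A'" "finite B'" using finite_subset by blast+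
  have same: "A' - {m} = B' - {m}"
  proof -
    have "t \<in> B" if "t \<in> A" "sub n m t" "t \<noteq> m" for t
    proof -
      have "m < t" using sub_le[OF that(2) m2] that(3) by simp
      then show ?thesis using that(1) mx unfolding D_def by force
    qed
    moreover have "t \<in> A" if "t \<in> B" "sub n m t" "t \<noteq> m" for t
    proof -
      have "m < t" using sub_le[OF that(2) m2] that(3) by simp
      then show ?thesis using that(1) mx unfolding D_def by force
    qed
    ultimately show ?thesis unfolding A'_def B'_def by blast
  qed
  have smm: "sub n m m" by (simp add: sub_def)
  have cA: "card A' = card (A' - {m}) + (if m \<in> A then 1 else 0)"
  proof (cases "m \<in> A")
    case True then have "m \<in> A'" using smm unfolding A'_def by simp
    then show ?thesis using True fA card.remove by fastforce
  next
    case False then have "m \<notin> A'" unfolding A'_def by simp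
    then show ?thesis using False by simp
  qed
  have cB: "card B' = card (B' - {m}) + (if m \<in> B then 1 else 0)"
  proof (cases "m \<in> B")
    case True then have "m \<in> B'" using smm unfolding B'_def by simp
    then show ?thesis using True fA card.remove by fastforce
  next
    case False then have "m \<notin> B'" unfolding B'_def by simp
    then show ?thesis using False by simp
  qed
  have "(m \<in> A) \<noteq> (m \<in> B)" using mD unfolding D_def by blast
  moreover have e2: "card A' mod 2 = card B' mod 2" using eq sA sB by simp
  ultimately show False
  proof (cases "m \<in> A")
    case True
    then have "m \<notin> B" using \<open>(m \<in> A) \<noteq> (m \<in> B)\<close> by simp
    then have "card A' = card (B' - {m}) + 1" "card B' = card (B' - {m})"
      using cA cB same True by simp_all
    then show False using e2 by presburger
  next
    case False
    then have "m \<in> B" using \<open>(m \<in> A) \<noteq> (m \<in> B)\<close> by simp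
    then have "card B' = card (A' - {m}) + 1" "card A' = card (A' - {m})"
      using cA cB same False by simp_all
    then show False using e2 by presburger
  qed
qed

definition supp :: "nat \<Rightarrow> nat \<Rightarrow> nat set" where
  "supp n x = {k. k < 2 ^ n \<and> sub n k x}"

lemma grow_eq: "grow n x = (\<lambda>k. if k < 2 ^ n \<and> sub n k x then 1 else 0)"
  by (auto simp: grow_def rowsum_def Gmat_sub fun_eq_iff)

lemma hw_grow: "hw n (grow n x) = card (supp n x)"
  by (simp add: hw_def grow_eq supp_def)

lemma finite_supp: "finite (supp n x)"
  by (simp add: supp_def)



lemma flip_flip: "flip_bit u (flip_bit u (k::nat)) = k"
  by (rule bit_eqI) (auto simp: bit_flip_bit_iff)

lemma inj_flip: "inj (flip_bit u :: nat \<Rightarrow> nat)"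
  by (metis injI flip_flip)

lemma weight2:
  assumes uw: "u < w" "w < n" and x2: "x < 2 ^ n" and bu: "bit x u" and bw: "\<not> bit x w"
    and y: "y = sw u w x"
  shows "hw n (rowsum n {x, y}) = card (supp n x)"
proof -
  have un: "u < n" using uw by simp
  have wn: "w < n" using uw by simp
  have xy: "x \<noteq> y" using y bu by (metis bit_sw tau_def bw)
  define Sx where "Sx = supp n x"
  define Sy where "Sy = supp n y"
  have fin: "finite Sx" "finite Sy" unfolding Sx_def Sy_def by (simp_all add: finite_supp)
  have ylt: "\<And>k. k < 2 ^ n \<longleftrightarrow> sw u w k < 2 ^ n" using sw_lt[OF un wn] by (metis sw_sw)
  have m1: "\<And>k. k \<in> Sx \<longleftrightarrow> sw u w k \<in> Sy"
    unfolding Sx_def Sy_def supp_def y using ylt by (simp add: sub_sw[OF un wn])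
  have m2: "\<And>k. k \<in> Sy \<longleftrightarrow> sw u w k \<in> Sx"
    using m1 sw_sw by metis
  have hw2: "hw n (rowsum n {x, y}) = card ((Sx - Sy) \<union> (Sy - Sx))"
  proof -
    have "{k. k < 2 ^ n \<and> rowsum n {x, y} k \<noteq> 0} = (Sx - Sy) \<union> (Sy - Sx)"
      using xy by (auto simp: rowsum_def Gmat_sub Sx_def Sy_def supp_def)
    then show ?thesis by (simp add: hw_def)
  qed
  have c1: "card ((Sx - Sy) \<union> (Sy - Sx)) = card (Sx - Sy) + card (Sy - Sx)"
    by (rule card_Un_disjoint) (use fin in auto)
  have "sw u w ` (Sx - Sy) = Sy - Sx"
  proof (rule set_eqI, rule iffI)
    fix k assume "k \<in> sw u w ` (Sx - Sy)"
    then obtain k0 where "k = sw u w k0" "k0 \<in> Sx - Sy" by auto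
    then show "k \<in> Sy - Sx" using m1[of k0] m1[of "sw u w k0"] sw_sw[of u w k0] by auto
  next
    fix k assume "k \<in> Sy - Sx"
    then have "sw u w k \<in> Sx - Sy" using m2[of k] m2[of "sw u w k"] sw_sw[of u w k] by auto
    then show "k \<in> sw u w ` (Sx - Sy)" by (metis image_eqI sw_sw)
  qed
  then have c2: "card (Sy - Sx) = card (Sx - Sy)"
    by (metis card_image inj_on_subset[OF inj_sw] subset_UNIV)
  have yb: "\<And>b. bit y b = bit x (tau u w b)" using y bit_sw by simp
  have yu: "\<not> bit y u" and yw: "bit y w" using yb bu bw uw by (auto simp: tau_def)
  have "flip_bit u ` (Sx \<inter> Sy) = Sx - Sy"
  proof (rule set_eqI, rule iffI)
    fix k assume "k \<in> flip_bit u ` (Sx \<inter> Sy)"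
    then obtain k0 where k: "k = flip_bit u k0" "k0 \<in> Sx" "k0 \<in> Sy" by auto
    have k0u: "\<not> bit k0 u" using k(3) yu un unfolding Sy_def supp_def sub_def by auto
    have "k < 2 ^ n"
      by (rule lt_of_bits) (use k(1,2) un in \<open>auto simp: bit_flip_bit_iff Sx_def supp_def dest: lt_bits\<close>)
    moreover have "sub n k x" using k(1,2) bu unfolding Sx_def supp_def sub_def by (auto simp: bit_flip_bit_iff)
    moreover have "\<not> sub n k y" using k(1) k0u yu un unfolding sub_def by (auto simp: bit_flip_bit_iff)
    ultimately show "k \<in> Sx - Sy" unfolding Sx_def Sy_def supp_def by simp
  next
    fix k assume kk: "k \<in> Sx - Sy"
    then have k2: "k < 2 ^ n" and skx: "sub n k x" and nky: "\<not> sub n k y"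
      unfolding Sx_def Sy_def supp_def by auto
    have ku: "bit k u"
    proof (rule ccontr)
      assume nku: "\<not> bit k u"
      have "sub n k y" unfolding sub_def
      proof (intro allI impI)
        fix b assume "b < n" "bit k b"
        then have "bit x b" using skx by (simp add: sub_def)
        then show "bit y b" using yb bw nku \<open>bit k b\<close> by (auto simp: tau_def)
      qed
      then show False using nky by simp
    qed
    define k0 where "k0 = flip_bit u k"
    have "k0 < 2 ^ n"
      by (rule lt_of_bits) (use k2 un in \<open>auto simp: k0_def bit_flip_bit_iff dest: lt_bits\<close>)
    moreover have "sub n k0 x" using skx bu unfolding sub_def k0_def by (auto simp: bit_flip_bit_iff)
    moreover have "sub n k0 y" unfolding sub_def
    proof (intro allI impI)
      fix b assume "b < n" "bit k0 b"
      then have "b \<noteq> u" "bit k b" using ku by (auto simp: k0_def bit_flip_bit_iff)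
      then have "bit x b" using skx \<open>b < n\<close> by (simp add: sub_def)
      then show "bit y b" using yb bw \<open>b \<noteq> u\<close> by (auto simp: tau_def)
    qed
    ultimately have "k0 \<in> Sx \<inter> Sy" unfolding Sx_def Sy_def supp_def by simp
    moreover have "k = flip_bit u k0" by (simp add: k0_def flip_flip)
    ultimately show "k \<in> flip_bit u ` (Sx \<inter> Sy)" by blast
  qed
  then have c3: "card (Sx \<inter> Sy) = card (Sx - Sy)"
    by (metis card_image inj_on_subset[OF inj_flip] subset_UNIV)
  have c4: "card Sx = card (Sx \<inter> Sy) + card (Sx - Sy)"
    using fin by (metis card_Int_Diff)
  show ?thesis using hw2 c1 c2 c3 c4 Sx_def by simp
qed



lemma coset_eq: "coset n x = (\<lambda>T. rowsum n (insert x T)) ` Pow {x<..<2 ^ n}"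
  by (auto simp: coset_def)

lemma rowsum_out: "\<forall>k. \<not> k < 2 ^ n \<longrightarrow> rowsum n T k = 0"
  by (simp add: rowsum_def)

lemma swap_step:
  assumes uw: "u < w" "w < n" and x2: "x < 2 ^ n" and bu: "bit x u" and bw: "\<not> bit x w"
    and y: "y = sw u w x"
  shows "hw n (grow n y) = hw n (grow n x)" "s n y < s n x"
proof -
  have un: "u < n" and wn: "w < n" using uw by auto
  have gy: "grow n y = pi n u w (grow n x)"
    unfolding grow_def pi_rowsum[OF un wn] y by simp
  show Weq: "hw n (grow n y) = hw n (grow n x)" using gy hw_pi[OF un wn] by simp
  have yx: "y + 2 ^ u = x + 2 ^ w" using sw_arith[OF bu bw] uw y by simp
  have "(2::nat) ^ u < 2 ^ w" using uw by simp
  then have xy: "x < y" using yx by linarith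
  have y2: "y < 2 ^ n" using y sw_lt[OF un wn x2] by simp
  have swy: "sw u w y = x" using y sw_sw by simp
  have ord: "x < sw u w t" if "y < t" for t
  proof (cases "bit t u = bit t w")
    case True then show ?thesis using that xy by (simp add: sw_def)
  next
    case False
    show ?thesis
    proof (cases "bit t u")
      case True
      then have "sw u w t + 2 ^ u = t + 2 ^ w" using False sw_arith uw by simp
      then show ?thesis using \<open>(2::nat) ^ u < 2 ^ w\<close> that xy by linarith
    next
      case f2: False
      then have "sw w u t + 2 ^ w = t + 2 ^ u" using False sw_arith[of t w u] uw by simp
      then have "sw u w t + 2 ^ w = t + 2 ^ u" using sw_sym by metis
      then show ?thesis using yx that by linarith
    qed
  qed
  define Wc where "Wc = hw n (grow n x)"
  define Bx where "Bx = {v \<in> coset n x. hw n v = Wc}"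
  define By where "By = {v \<in> coset n y. hw n v = Wc}"
  have sx: "s n x = card Bx" unfolding s_def S_def Bx_def Wc_def by simp
  have sy: "s n y = card By" unfolding s_def S_def By_def Wc_def Weq by simp
  have fBx: "finite Bx" unfolding Bx_def coset_eq by simp
  have img: "pi n u w v \<in> Bx \<and> (\<exists>T. T \<subseteq> {y<..<2 ^ n} \<and> v = rowsum n (insert y T)
      \<and> pi n u w v = rowsum n (insert x (sw u w ` T)) \<and> sw u w ` T \<subseteq> {x<..<2 ^ n})" if "v \<in> By" for v
  proof -
    have vc: "v \<in> coset n y" and hv: "hw n v = Wc" using that unfolding By_def by auto
    obtain T where T: "T \<subseteq> {y<..<2 ^ n}" "v = rowsum n (insert y T)"
      using vc unfolding coset_def by blast
    have pv: "pi n u w v = rowsum n (insert x (sw u w ` T))"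
      using T(2) pi_rowsum[OF un wn] swy by simp
    have sT: "sw u w ` T \<subseteq> {x<..<2 ^ n}"
      using T(1) ord sw_lt[OF un wn] by auto
    have "pi n u w v \<in> coset n x" unfolding coset_def using pv sT by blast
    moreover have "hw n (pi n u w v) = Wc" using hv hw_pi[OF un wn] by simp
    ultimately show ?thesis unfolding Bx_def using T pv sT by blast
  qed
  have sub1: "pi n u w ` By \<subseteq> Bx" using img by blast
  have inj: "inj_on (pi n u w) By"
  proof (rule inj_onI)
    fix v1 v2 assume "v1 \<in> By" "v2 \<in> By" "pi n u w v1 = pi n u w v2"
    then obtain T1 T2 where t1: "v1 = rowsum n (insert y T1)" and t2: "v2 = rowsum n (insert y T2)"
      using img by meson
    have o1: "\<forall>k. \<not> k < 2 ^ n \<longrightarrow> v1 k = 0" using t1 rowsum_out by simp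
    have o2: "\<forall>k. \<not> k < 2 ^ n \<longrightarrow> v2 k = 0" using t2 rowsum_out by simp
    have "v1 = pi n u w (pi n u w v1)" by (simp add: pi_pi[OF un wn o1])
    also have "\<dots> = pi n u w (pi n u w v2)" using \<open>pi n u w v1 = pi n u w v2\<close> by simp
    also have "\<dots> = v2" by (simp add: pi_pi[OF un wn o2])
    finally show "v1 = v2" .
  qed
  define e where "e = rowsum n (insert x {y})"
  have "{y} \<in> Pow {x<..<2 ^ n}" using xy y2 by simp
  then have "e \<in> coset n x" unfolding coset_eq e_def by (rule imageI)
  moreover have "hw n e = Wc"
    unfolding e_def Wc_def hw_grow using weight2[OF uw x2 bu bw y] by simp
  ultimately have eB: "e \<in> Bx" unfolding Bx_def by simp
  have "e \<notin> pi n u w ` By"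
  proof
    assume "e \<in> pi n u w ` By"
    then obtain v where "v \<in> By" "e = pi n u w v" by auto
    from img[OF \<open>v \<in> By\<close>] obtain T where T0: "T \<subseteq> {y<..<2 ^ n}"
      "pi n u w v = rowsum n (insert x (sw u w ` T))" "sw u w ` T \<subseteq> {x<..<2 ^ n}" by blast
    then have T: "T \<subseteq> {y<..<2 ^ n}" "e = rowsum n (insert x (sw u w ` T))"
      "sw u w ` T \<subseteq> {x<..<2 ^ n}" using \<open>e = pi n u w v\<close> by simp_all
    have "insert x {y} = insert x (sw u w ` T)"
      by (rule indep[of _ n]) (use T x2 y2 e_def in auto)
    then have "y \<in> sw u w ` T" using xy by auto
    then obtain t where "t \<in> T" "y = sw u w t" by auto
    then have "t = x" using swy sw_sw by metis
    then show False using \<open>t \<in> T\<close> T(1) xy by auto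
  qed
  then have "pi n u w ` By \<subset> Bx" using sub1 eB by blast
  then have "card (pi n u w ` By) < card Bx" using fBx psubset_card_mono by blast
  then show "s n y < s n x" using sx sy card_image[OF inj] by simp
qed

lemma mono_step:
  assumes x2: "x < 2 ^ n" and y2: "y < 2 ^ n" and h: "\<forall>b<n. bit x b \<longrightarrow> bit y b"
  shows "hw n (grow n x) \<le> hw n (grow n y)"
    "hw n (grow n x) = hw n (grow n y) \<Longrightarrow> x = y"
proof -
  have ss: "supp n x \<subseteq> supp n y"
  proof
    fix k assume "k \<in> supp n x"
    then have "k < 2 ^ n" "\<forall>b<n. bit k b \<longrightarrow> bit x b" unfolding supp_def sub_def by auto
    then show "k \<in> supp n y" using h unfolding supp_def sub_def by blast
  qed
  show "hw n (grow n x) \<le> hw n (grow n y)" unfolding hw_grow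
    using ss finite_supp card_mono by blast
  assume "hw n (grow n x) = hw n (grow n y)"
  then have eqs: "supp n x = supp n y" unfolding hw_grow using ss finite_supp card_subset_eq by blast
  have "x \<in> supp n x" "y \<in> supp n y" using x2 y2 by (auto simp: supp_def sub_def)
  then have "x \<in> supp n y" "y \<in> supp n x" using eqs by simp_all
  then have "sub n x y" "sub n y x" by (simp_all add: supp_def)
  then have "\<forall>b<n. bit x b = bit y b" unfolding sub_def by blast
  then show "x = y" using eq_bits[OF x2 y2] by blast
qed



lemma bitn_le: "bitn k x \<le> bitn k y \<longleftrightarrow> (bit x k \<longrightarrow> bit y k)"
  by (simp add: bitn_bit)

lemma swap_conv:
  assumes "u < w" "w < n" "x < 2 ^ n" "y < 2 ^ n"
    "\<forall>k<n. k \<noteq> u \<and> k \<noteq> w \<longrightarrow> bitn k x = bitn k y"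
    "bitn u x = 1" "bitn w y = 1" "bitn w x = 0" "bitn u y = 0"
  shows "bit x u" "\<not> bit x w" "y = sw u w x"
proof -
  show bu: "bit x u" using assms(6) by (simp add: bitn_bit split: if_splits)
  show bw: "\<not> bit x w" using assms(8) by (simp add: bitn_bit split: if_splits)
  have yw: "bit y w" "\<not> bit y u" using assms(7,9) by (simp_all add: bitn_bit split: if_splits)
  have "\<forall>b<n. bit y b = bit (sw u w x) b"
  proof (intro allI impI)
    fix b assume "b < n"
    show "bit y b = bit (sw u w x) b"
    proof (cases "b = u \<or> b = w")
      case True then show ?thesis using bu bw yw assms(1) by (auto simp: bit_sw tau_def)
    next
      case False
      then have "bitn b x = bitn b y" using assms(5) \<open>b < n\<close> by blast
      then have "bit x b = bit y b" by (simp add: bitn_bit split: if_splits)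
      then show ?thesis using False by (simp add: bit_sw tau_def)
    qed
  qed
  then show "y = sw u w x" using eq_bits[OF assms(4) sw_lt[OF _ _ assms(3)]] assms(1,2) by simp
qed

theorem theorem4:
  fixes n i j l :: nat and a :: "nat \<Rightarrow> nat"
  assumes "i < j" and "j < 2 ^ n"
    and "\<forall>m\<le>l. a m < 2 ^ n"
    and "a 0 = i" and "a l = j"
    and "\<forall>m<l.
           (\<exists>u w. u < w \<and> w < n
              \<and> (\<forall>k<n. k \<noteq> u \<and> k \<noteq> w \<longrightarrow> bitn k (a m) = bitn k (a (Suc m)))
              \<and> bitn u (a m) = 1 \<and> bitn w (a (Suc m)) = 1
              \<and> bitn w (a m) = 0 \<and> bitn u (a (Suc m)) = 0)
         \<or> (\<forall>k<n. bitn k (a m) \<le> bitn k (a (Suc m)))"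
  shows "(hw n (grow n j) > hw n (grow n i)
          \<and> \<not> (hw n (grow n j) = hw n (grow n i) \<and> s n i > s n j))
       \<or> (\<not> (hw n (grow n j) > hw n (grow n i))
          \<and> (hw n (grow n j) = hw n (grow n i) \<and> s n i > s n j))"
proof -
  define W where "W z = hw n (grow n z)" for z
  have P: "W (a 0) \<le> W (a m) \<and> (W (a 0) = W (a m) \<longrightarrow> a m = a 0 \<or> s n (a m) < s n (a 0))"
    if "m \<le> l" for m
    using that
  proof (induction m)
    case 0 then show ?case by simp
  next
    case (Suc m)
    then have ml: "m < l" and IH: "W (a 0) \<le> W (a m) \<and> (W (a 0) = W (a m) \<longrightarrow> a m = a 0 \<or> s n (a m) < s n (a 0))"
      by auto
    have x2: "a m < 2 ^ n" and y2: "a (Suc m) < 2 ^ n" using assms(3) ml by auto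
    note st = assms(6)[rule_format, OF ml]
    from st consider
      (sw) u w where "u < w" "w < n"
        "\<forall>k<n. k \<noteq> u \<and> k \<noteq> w \<longrightarrow> bitn k (a m) = bitn k (a (Suc m))"
        "bitn u (a m) = 1" "bitn w (a (Suc m)) = 1" "bitn w (a m) = 0" "bitn u (a (Suc m)) = 0"
      | (mo) "\<forall>k<n. bitn k (a m) \<le> bitn k (a (Suc m))"
      by (elim disjE exE conjE) blast+
    then show ?case
    proof cases
      case sw
      note c = swap_conv[OF sw(1,2) x2 y2 sw(3-7)]
      have e: "W (a (Suc m)) = W (a m)" unfolding W_def by (rule swap_step(1)[OF sw(1,2) x2 c])
      have lt: "s n (a (Suc m)) < s n (a m)" by (rule swap_step(2)[OF sw(1,2) x2 c])
      have "W (a 0) \<le> W (a (Suc m))" using IH e by simp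
      moreover have "s n (a (Suc m)) < s n (a 0)" if "W (a 0) = W (a (Suc m))"
      proof -
        have "a m = a 0 \<or> s n (a m) < s n (a 0)" using IH e that by simp
        then show ?thesis using lt by (metis order.strict_trans)
      qed
      ultimately show ?thesis by blast
    next
      case mo
      then have h: "\<forall>b<n. bit (a m) b \<longrightarrow> bit (a (Suc m)) b" using bitn_le by blast
      note ms = mono_step[OF x2 y2 h]
      show ?thesis
      proof (cases "W (a 0) = W (a (Suc m))")
        case True
        then have "W (a m) = W (a (Suc m))" using IH ms(1) unfolding W_def by linarith
        then have "a m = a (Suc m)" using ms(2) unfolding W_def by simp
        then show ?thesis using IH by metis
      next
        case False
        have "W (a 0) \<le> W (a (Suc m))" using IH ms(1) unfolding W_def by (meson order.trans)
        then show ?thesis using False by blast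
      qed
    qed
  qed
  have "W i \<le> W j \<and> (W i = W j \<longrightarrow> j = i \<or> s n j < s n i)"
    using P[of l] assms(4,5) by simp
  then have h1: "W i \<le> W j" and h2: "W i = W j \<Longrightarrow> s n j < s n i" using assms(1) by auto
  show ?thesis
  proof (cases "W i = W j")
    case True then show ?thesis using h2 unfolding W_def by simp
  next
    case False then have "W i < W j" using h1 by simp
    then show ?thesis using False unfolding W_def by simp
  qed
qed


end
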